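(* Let $Z$ be any infinite discrete space. Then the remainder $\beta Z\setminus Z$ is not a $\Delta$-space.
   Context: $\beta Z$ is the Stone–Čech compactification of $Z$. A topological space $X$ is a $\Delta$-space if for every decreasing sequence $\{D_n:n\in\omega\}$ of subsets of $X$ with $\bigcap_n D_n=\emptyset$ there is a decreasing sequence $\{V_n:n\in\omega\}$ of open subsets of $X$ with $D_n\subseteq V_n$ for all $n$ and $\bigcap_n V_n=\emptyset$. *)

theory Defs
  imports "HOL-Analysis.Analysis"
begin

definition delta_space :: "'a topology \<Rightarrow> bool" where
  "delta_space X \<longleftrightarrow>
     (\<forall>D :: nat \<Rightarrow> 'a set.
        (\<forall>n. D n \<subseteq> topspace X) \<and> decseq D \<and> (\<Inter>n. D n) = {} \<longrightarrow>
        (\<exists>V :: nat \<Rightarrow> 'a set. (\<forall>n. openin X (V n)) \<and> decseq V \<and>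
            (\<forall>n. D n \<subseteq> V n) \<and> (\<Inter>n. V n) = {}))"

definition is_ultrafilter_on :: "'a set \<Rightarrow> 'a set set \<Rightarrow> bool" where
  "is_ultrafilter_on Z U \<longleftrightarrow>
     U \<subseteq> Pow Z \<and> Z \<in> U \<and> {} \<notin> U \<and>
     (\<forall>A\<in>U. \<forall>B\<in>U. A \<inter> B \<in> U) \<and>
     (\<forall>A\<in>U. \<forall>B. A \<subseteq> B \<and> B \<subseteq> Z \<longrightarrow> B \<in> U) \<and>
     (\<forall>A. A \<subseteq> Z \<longrightarrow> A \<in> U \<or> Z - A \<in> U)"

text \<open>The principal ultrafilter at z (this is the embedding of Z into beta Z).\<close>
definition principal_uf :: "'a set \<Rightarrow> 'a \<Rightarrow> 'a set set" where
  "principal_uf Z z = {A. A \<subseteq> Z \<and> z \<in> A}"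

text \<open>Stone-Cech compactification of the discrete space Z: the space of all
  ultrafilters on Z with the Stone topology, whose basic open sets are
  {U. A \<in> U} for A \<subseteq> Z.\<close>
definition beta_discrete :: "'a set \<Rightarrow> 'a set set topology" where
  "beta_discrete Z =
     topology_generated_by
       ((\<lambda>A. {U. is_ultrafilter_on Z U \<and> A \<in> U}) ` Pow Z)"

definition beta_remainder :: "'a set \<Rightarrow> 'a set set topology" where
  "beta_remainder Z =
     subtopology (beta_discrete Z) (topspace (beta_discrete Z) - principal_uf Z ` Z)"

end

theory Submission
  imports Defs
begin

definition fip :: "'a set \<Rightarrow> 'a set set \<Rightarrow> bool" where
  "fip Z M \<longleftrightarrow> M \<subseteq> Pow Z \<and> (\<forall>G. finite G \<and> G \<subseteq> M \<longrightarrow> Z \<inter> \<Inter>G \<noteq> {})"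


lemma uf_exists:
  assumes "fip Z M0"
  shows "\<exists>q. is_ultrafilter_on Z q \<and> M0 \<subseteq> q"
proof -
  let ?A = "{M. M0 \<subseteq> M \<and> fip Z M}"
  have "\<forall>C\<in>chains ?A. \<exists>U\<in>?A. \<forall>X\<in>C. X \<subseteq> U"
  proof
    fix C assume C: "C \<in> chains ?A"
    show "\<exists>U\<in>?A. \<forall>X\<in>C. X \<subseteq> U"
    proof (cases "C = {}")
      case True thus ?thesis using assms by auto
    next
      case False
      have ch: "subset.chain UNIV C" using C by (simp add: chains_def chain_subset_alt_def)
      have "fip Z (\<Union>C)"
        unfolding fip_def
      proof (intro conjI allI impI)
        show "\<Union>C \<subseteq> Pow Z" using C by (auto simp: chains_def fip_def)
        fix G assume G: "finite G \<and> G \<subseteq> \<Union>C"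
        then obtain B where "B \<in> C" "G \<subseteq> B"
          using finite_subset_Union_chain[OF _ _ False ch] by blast
        then show "Z \<inter> \<Inter>G \<noteq> {}" using C G by (auto simp: chains_def fip_def)
      qed
      moreover have "M0 \<subseteq> \<Union>C" using False C by (auto simp: chains_def)
      ultimately show ?thesis by blast
    qed
  qed
  from Zorn_Lemma2[OF this] obtain M where M: "M \<in> ?A" and max0: "\<forall>X\<in>?A. M \<subseteq> X \<longrightarrow> X = M"
    by (elim bexE)
  have max: "\<And>X. X \<in> ?A \<Longrightarrow> M \<subseteq> X \<Longrightarrow> X = M" using max0 by blast
  have MP: "M \<subseteq> Pow Z" and MF: "\<And>G. finite G \<Longrightarrow> G \<subseteq> M \<Longrightarrow> Z \<inter> \<Inter>G \<noteq> {}"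
    using M by (auto simp: fip_def)
  have add: "X \<in> M" if "X \<subseteq> Z" "\<And>G. finite G \<Longrightarrow> G \<subseteq> M \<Longrightarrow> Z \<inter> \<Inter>G \<inter> X \<noteq> {}" for X
  proof -
    have "fip Z (insert X M)" unfolding fip_def
    proof (intro conjI allI impI)
      show "insert X M \<subseteq> Pow Z" using MP that(1) by auto
      fix G assume G: "finite G \<and> G \<subseteq> insert X M"
      show "Z \<inter> \<Inter>G \<noteq> {}"
      proof (cases "X \<in> G")
        case True
        have "Z \<inter> \<Inter>G = Z \<inter> \<Inter>(G - {X}) \<inter> X" using True by blast
        thus ?thesis using that(2)[of "G - {X}"] G by auto
      next
        case False thus ?thesis using MF G by auto
      qed
    qed
    hence "insert X M = M" using max[of "insert X M"] M by auto
    thus ?thesis by auto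
  qed
  have Z: "Z \<in> M" by (rule add) (use MF in auto)
  have emp: "{} \<notin> M" using MF[of "{{}}"] by auto
  have int: "A \<inter> B \<in> M" if "A \<in> M" "B \<in> M" for A B
  proof (rule add)
    show "A \<inter> B \<subseteq> Z" using that MP by auto
    fix G assume "finite G" "G \<subseteq> M"
    hence "Z \<inter> \<Inter>(insert A (insert B G)) \<noteq> {}" using MF[of "insert A (insert B G)"] that by auto
    thus "Z \<inter> \<Inter>G \<inter> (A \<inter> B) \<noteq> {}" by auto
  qed
  have up: "B \<in> M" if "A \<in> M" "A \<subseteq> B" "B \<subseteq> Z" for A B
  proof (rule add)
    show "B \<subseteq> Z" by fact
    fix G assume "finite G" "G \<subseteq> M"
    hence "Z \<inter> \<Inter>(insert A G) \<noteq> {}" using MF[of "insert A G"] that by auto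
    thus "Z \<inter> \<Inter>G \<inter> B \<noteq> {}" using that by auto
  qed
  have compl: "A \<in> M \<or> Z - A \<in> M" if "A \<subseteq> Z" for A
  proof (rule ccontr)
    assume "\<not> (A \<in> M \<or> Z - A \<in> M)"
    hence n1: "A \<notin> M" and n2: "Z - A \<notin> M" by auto
    have "\<not> (\<forall>G. finite G \<longrightarrow> G \<subseteq> M \<longrightarrow> Z \<inter> \<Inter>G \<inter> A \<noteq> {})"
      using n1 add[of A] that by metis
    then obtain G1 where G1: "finite G1" "G1 \<subseteq> M" "Z \<inter> \<Inter>G1 \<inter> A = {}"
      by auto
    have "\<not> (\<forall>G. finite G \<longrightarrow> G \<subseteq> M \<longrightarrow> Z \<inter> \<Inter>G \<inter> (Z - A) \<noteq> {})"
      using n2 add[of "Z - A"] by (metis Diff_subset)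
    then obtain G2 where G2: "finite G2" "G2 \<subseteq> M" "Z \<inter> \<Inter>G2 \<inter> (Z - A) = {}"
      by auto
    have "Z \<inter> \<Inter>(G1 \<union> G2) = {}" using G1(3) G2(3) by blast
    thus False using MF[of "G1 \<union> G2"] G1 G2 by auto
  qed
  have "is_ultrafilter_on Z M"
    unfolding is_ultrafilter_on_def
  proof (intro conjI ballI allI impI)
    show "M \<subseteq> Pow Z" by fact
    show "Z \<in> M" by fact
    show "{} \<notin> M" by fact
    fix A B assume "A \<in> M" "B \<in> M" thus "A \<inter> B \<in> M" by (rule int)
  next
    fix A B assume "A \<in> M" "A \<subseteq> B \<and> B \<subseteq> Z" thus "B \<in> M" using up by blast
  next
    fix A :: "'a set" assume "A \<subseteq> Z" thus "A \<in> M \<or> Z - A \<in> M" by (rule compl)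
  qed
  thus ?thesis using M by blast
qed

abbreviation uf where "uf Z q \<equiv> is_ultrafilter_on Z q"

definition rem :: "'a set \<Rightarrow> 'a set set set" where
  "rem Z = {q. uf Z q} - principal_uf Z ` Z"

lemma uf_sub: "uf Z q \<Longrightarrow> A \<in> q \<Longrightarrow> A \<subseteq> Z"
  by (auto simp: is_ultrafilter_on_def)
lemma uf_Z: "uf Z q \<Longrightarrow> Z \<in> q"
  by (auto simp: is_ultrafilter_on_def)
lemma uf_empty: "uf Z q \<Longrightarrow> {} \<notin> q"
  by (auto simp: is_ultrafilter_on_def)
lemma uf_int: "uf Z q \<Longrightarrow> A \<in> q \<Longrightarrow> B \<in> q \<Longrightarrow> A \<inter> B \<in> q"
  unfolding is_ultrafilter_on_def by blast
lemma uf_up: "uf Z q \<Longrightarrow> A \<in> q \<Longrightarrow> A \<subseteq> B \<Longrightarrow> B \<subseteq> Z \<Longrightarrow> B \<in> q"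
  unfolding is_ultrafilter_on_def by blast
lemma uf_compl: "uf Z q \<Longrightarrow> A \<subseteq> Z \<Longrightarrow> A \<notin> q \<Longrightarrow> Z - A \<in> q"
  unfolding is_ultrafilter_on_def by blast
lemma uf_not_both: "uf Z q \<Longrightarrow> A \<in> q \<Longrightarrow> Z - A \<in> q \<Longrightarrow> False"
  using uf_int[of Z q A "Z - A"] uf_empty[of Z q] by (simp add: Int_Diff)

lemma uf_finite_inter:
  assumes "uf Z q" "finite G" "G \<subseteq> q"
  shows "Z \<inter> \<Inter>G \<in> q"
  using assms(2,3)
proof (induction G rule: finite_induct)
  case empty thus ?case using uf_Z[OF assms(1)] by simp
next
  case (insert A G)
  have "Z \<inter> \<Inter>(insert A G) = A \<inter> (Z \<inter> \<Inter>G)" by auto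
  thus ?case using insert uf_int[OF assms(1)] by auto
qed

lemma rem_cof: "q \<in> rem Z \<Longrightarrow> z \<in> Z \<Longrightarrow> Z - {z} \<in> q"
proof -
  assume q: "q \<in> rem Z" and z: "z \<in> Z"
  have u: "uf Z q" using q by (simp add: rem_def)
  have "{z} \<notin> q"
  proof
    assume zq: "{z} \<in> q"
    have "q = principal_uf Z z"
    proof
      show "q \<subseteq> principal_uf Z z"
      proof
        fix A assume A: "A \<in> q"
        have "A \<inter> {z} \<in> q" using uf_int[OF u A zq] .
        hence "A \<inter> {z} \<noteq> {}" using uf_empty[OF u] by metis
        thus "A \<in> principal_uf Z z" using uf_sub[OF u A] by (auto simp: principal_uf_def)
      qed
      show "principal_uf Z z \<subseteq> q"
        using uf_up[OF u zq] by (auto simp: principal_uf_def)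
    qed
    thus False using q z unfolding rem_def by blast
  qed
  thus ?thesis using uf_compl[OF u] z by auto
qed

lemma rem_ofcof: assumes "uf Z q" "\<And>z. z \<in> Z \<Longrightarrow> Z - {z} \<in> q" shows "q \<in> rem Z"
proof -
  have "q \<noteq> principal_uf Z z" if "z \<in> Z" for z
  proof
    assume "q = principal_uf Z z"
    hence "Z - {z} \<in> principal_uf Z z" using assms(2) that by simp
    thus False by (simp add: principal_uf_def)
  qed
  thus ?thesis using assms(1) unfolding rem_def by blast
qed

lemma free_ext:
  assumes F: "\<F> \<subseteq> Pow Z"
    and fin: "\<And>G. finite G \<Longrightarrow> G \<subseteq> \<F> \<union> {Z - {z} | z. z \<in> Z} \<Longrightarrow> Z \<inter> \<Inter>G \<noteq> {}"
  shows "\<exists>q\<in>rem Z. \<F> \<subseteq> q"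
proof -
  have "fip Z (\<F> \<union> {Z - {z} | z. z \<in> Z})" unfolding fip_def
  proof (intro conjI allI impI)
    show "\<F> \<union> {Z - {z} |z. z \<in> Z} \<subseteq> Pow Z" using F by blast
  qed (use fin in blast)
  then obtain q where q: "uf Z q" "\<F> \<union> {Z - {z} | z. z \<in> Z} \<subseteq> q"
    using uf_exists by blast
  hence "q \<in> rem Z" by (intro rem_ofcof) auto
  thus ?thesis using q by blast
qed

lemma topspace_bd: "topspace (beta_discrete Z) = {q. uf Z q}"
  unfolding beta_discrete_def topology_generated_by_topspace
  by (auto dest: uf_Z)

lemma topspace_br: "topspace (beta_remainder Z) = rem Z"
  unfolding beta_remainder_def by (simp add: topspace_bd rem_def) blast

lemma gen_nbhd:
  assumes "generate_topology_on ((\<lambda>A. {U. uf Z U \<and> A \<in> U}) ` Pow Z) W"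
  shows "W \<subseteq> {q. uf Z q} \<and> (\<forall>q\<in>W. \<exists>B. B \<subseteq> Z \<and> B \<in> q \<and> {U. uf Z U \<and> B \<in> U} \<subseteq> W)"
  using assms
proof (induction rule: generate_topology_on.induct)
  case Empty thus ?case by simp
next
  case (Int a b)
  from Int.IH have aU: "a \<subseteq> {q. uf Z q}" and aN: "\<forall>q\<in>a. \<exists>B. B \<subseteq> Z \<and> B \<in> q \<and> {U. uf Z U \<and> B \<in> U} \<subseteq> a"
    and bU: "b \<subseteq> {q. uf Z q}" and bN: "\<forall>q\<in>b. \<exists>B. B \<subseteq> Z \<and> B \<in> q \<and> {U. uf Z U \<and> B \<in> U} \<subseteq> b"
    by auto
  have "\<forall>q\<in>a \<inter> b. \<exists>B. B \<subseteq> Z \<and> B \<in> q \<and> {U. uf Z U \<and> B \<in> U} \<subseteq> a \<inter> b"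
  proof
    fix q assume qab: "q \<in> a \<inter> b"
    from qab aN obtain B1 where B1: "B1 \<subseteq> Z" "B1 \<in> q" "{U. uf Z U \<and> B1 \<in> U} \<subseteq> a"
      by blast
    from qab bN obtain B2 where B2: "B2 \<subseteq> Z" "B2 \<in> q" "{U. uf Z U \<and> B2 \<in> U} \<subseteq> b"
      by blast
    have uq: "uf Z q" using qab aU by blast
    have "{U. uf Z U \<and> B1 \<inter> B2 \<in> U} \<subseteq> a \<inter> b"
    proof
      fix U assume "U \<in> {U. uf Z U \<and> B1 \<inter> B2 \<in> U}"
      hence U: "uf Z U" "B1 \<inter> B2 \<in> U" by auto
      have "B1 \<in> U" using uf_up[OF U(1) U(2) _ B1(1)] by blast
      moreover have "B2 \<in> U" using uf_up[OF U(1) U(2) _ B2(1)] by blast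
      ultimately show "U \<in> a \<inter> b" using B1(3) B2(3) U(1) by blast
    qed
    thus "\<exists>B. B \<subseteq> Z \<and> B \<in> q \<and> {U. uf Z U \<and> B \<in> U} \<subseteq> a \<inter> b"
      using B1 B2 uf_int[OF uq B1(2) B2(2)] by (intro exI[of _ "B1 \<inter> B2"]) auto
  qed
  moreover have "a \<inter> b \<subseteq> {q. uf Z q}" using aU by blast
  ultimately show ?case by blast
next
  case (UN K)
  have IH1: "k \<subseteq> {q. uf Z q}" and IH2: "\<forall>q\<in>k. \<exists>B. B \<subseteq> Z \<and> B \<in> q \<and> {U. uf Z U \<and> B \<in> U} \<subseteq> k"
    if "k \<in> K" for k using UN.IH[OF that] by simp_all
  have "\<forall>q\<in>\<Union>K. \<exists>B. B \<subseteq> Z \<and> B \<in> q \<and> {U. uf Z U \<and> B \<in> U} \<subseteq> \<Union>K"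
  proof
    fix q assume "q \<in> \<Union>K"
    then obtain k where k: "k \<in> K" "q \<in> k" by (rule UnionE)
    then obtain B where "B \<subseteq> Z" "B \<in> q" "{U. uf Z U \<and> B \<in> U} \<subseteq> k"
      using IH2[OF k(1)] by blast
    thus "\<exists>B. B \<subseteq> Z \<and> B \<in> q \<and> {U. uf Z U \<and> B \<in> U} \<subseteq> \<Union>K"
      using k(1) by blast
  qed
  moreover have "\<Union>K \<subseteq> {q. uf Z q}" using IH1 by (rule Union_least)
  ultimately show ?case by (rule conjI[rotated])
next
  case (Basis s)
  then obtain A where A: "A \<subseteq> Z" "s = {U. uf Z U \<and> A \<in> U}" by blast
  show ?case unfolding A(2) using A(1) by blast
qed

lemma br_nbhd:
  assumes "openin (beta_remainder Z) V" "q \<in> V"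
  shows "\<exists>B. B \<subseteq> Z \<and> B \<in> q \<and> (\<forall>u\<in>rem Z. B \<in> u \<longrightarrow> u \<in> V)"
proof -
  have "\<exists>U. openin (beta_discrete Z) U \<and> V = U \<inter> (topspace (beta_discrete Z) - principal_uf Z ` Z)"
    using assms(1) unfolding beta_remainder_def openin_subtopology .
  moreover have "topspace (beta_discrete Z) - principal_uf Z ` Z = rem Z"
    unfolding topspace_bd rem_def ..
  ultimately obtain U where U: "openin (beta_discrete Z) U" "V = U \<inter> rem Z"
    by metis
  have "generate_topology_on ((\<lambda>A. {U. uf Z U \<and> A \<in> U}) ` Pow Z) U"
    using U(1) unfolding beta_discrete_def openin_topology_generated_by_iff .
  have "q \<in> U" using assms(2) U(2) by blast
  then obtain B where B:
    "B \<subseteq> Z" "B \<in> q" "{U. uf Z U \<and> B \<in> U} \<subseteq> U" using gen_nbhd[OF \<open>generate_topology_on _ U\<close>] by blast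
  have "\<forall>u\<in>rem Z. B \<in> u \<longrightarrow> u \<in> V"
  proof (intro ballI impI)
    fix u assume u: "u \<in> rem Z" "B \<in> u"
    hence "uf Z u" by (simp add: rem_def)
    hence "u \<in> U" using B(3) u(2) by blast
    thus "u \<in> V" using U(2) u(1) by blast
  qed
  thus ?thesis using B by blast
qed


definition EE :: "(bool list \<times> nat \<Rightarrow> 'a) \<Rightarrow> nat \<Rightarrow> 'a set" where
  "EE e k = e ` {(xs,t). k < length xs \<and> xs!k}"

definition Fam :: "(bool list \<times> nat \<Rightarrow> 'a) \<Rightarrow> 'a set \<Rightarrow> (nat \<Rightarrow> bool) \<Rightarrow> 'a set set" where
  "Fam e Z y = {EE e k | k. y k} \<union> {Z - EE e k | k. \<not> y k}"

definition FamB :: "(bool list \<times> nat \<Rightarrow> 'a) \<Rightarrow> 'a set \<Rightarrow> (nat \<Rightarrow> bool) \<Rightarrow> nat \<Rightarrow> 'a set set" where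
  "FamB e Z y m = {EE e k | k. k < m \<and> y k} \<union> {Z - EE e k | k. k < m \<and> \<not> y k}"

lemma FamB_mono: "m \<le> m' \<Longrightarrow> FamB e Z y m \<subseteq> FamB e Z y m'"
  unfolding FamB_def by fastforce

lemma FamB_agree: "(\<And>k. k < m \<Longrightarrow> y' k = y k) \<Longrightarrow> FamB e Z y m \<subseteq> Fam e Z y'"
  unfolding FamB_def Fam_def by fastforce

lemma fin_reduce:
  assumes "finite G" "G \<subseteq> Fam e Z y \<union> {Z - {z} | z. z \<in> Z} \<union> H"
  shows "\<exists>m S. finite S \<and> S \<subseteq> Z \<and> G \<subseteq> FamB e Z y m \<union> {Z - {z} | z. z \<in> S} \<union> H"
  using assms
proof (induction G rule: finite_induct)
  case empty thus ?case by blast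
next
  case (insert g G)
  have "G \<subseteq> Fam e Z y \<union> {Z - {z} | z. z \<in> Z} \<union> H" using insert.prems by (rule subset_trans[OF subset_insertI])
  from insert.IH[OF this] obtain m S where mS: "finite S" "S \<subseteq> Z" "G \<subseteq> FamB e Z y m \<union> {Z - {z} | z. z \<in> S} \<union> H"
    by blast
  have g: "g \<in> Fam e Z y \<union> {Z - {z} | z. z \<in> Z} \<union> H" using insert.prems by (simp only: insert_subset)
  show ?case
  proof (cases "g \<in> Fam e Z y")
    case True
    then obtain k where k: "g = EE e k \<and> y k \<or> g = Z - EE e k \<and> \<not> y k"
      unfolding Fam_def by blast
    have "g \<in> FamB e Z y (max m (Suc k))"
      using k unfolding FamB_def by auto
    moreover have "G \<subseteq> FamB e Z y (max m (Suc k)) \<union> {Z - {z} | z. z \<in> S} \<union> H"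
      using mS(3) FamB_mono[of m "max m (Suc k)" e Z y] by auto
    ultimately have "insert g G \<subseteq> FamB e Z y (max m (Suc k)) \<union> {Z - {z} | z. z \<in> S} \<union> H"
      by (simp only: insert_subset) simp
    thus ?thesis using mS(1,2) by (intro exI[of _ "max m (Suc k)"] exI[of _ S] conjI)
  next
    case False
    show ?thesis
    proof (cases "g \<in> H")
      case True
      hence "insert g G \<subseteq> FamB e Z y m \<union> {Z - {z} | z. z \<in> S} \<union> H" using mS(3) by (simp only: insert_subset) simp
      thus ?thesis using mS(1,2) by (intro exI[of _ m] exI[of _ S] conjI)
    next
      case False
      with g \<open>g \<notin> Fam e Z y\<close> obtain z where z: "z \<in> Z" "g = Z - {z}" by blast
      have "g \<in> {Z - {z'} | z'. z' \<in> insert z S}" using z(2) by blast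
      moreover have "G \<subseteq> FamB e Z y m \<union> {Z - {z'} | z'. z' \<in> insert z S} \<union> H"
        using mS(3) by blast
      ultimately have "insert g G \<subseteq> FamB e Z y m \<union> {Z - {z'} | z'. z' \<in> insert z S} \<union> H"
        by (simp only: insert_subset) simp
      moreover have "finite (insert z S)" "insert z S \<subseteq> Z" using mS(1,2) z(1) by auto
      ultimately show ?thesis by (intro exI[of _ m] exI[of _ "insert z S"] conjI)
    qed
  qed
qed

lemma Fam_sub: "range e \<subseteq> Z \<Longrightarrow> Fam e Z y \<subseteq> Pow Z"
  unfolding Fam_def EE_def by blast

lemma Fam_iff:
  assumes "uf Z q" "Fam e Z y \<subseteq> q" "range e \<subseteq> Z"
  shows "EE e k \<in> q \<longleftrightarrow> y k"
proof
  assume "EE e k \<in> q"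
  show "y k"
  proof (rule ccontr)
    assume "\<not> y k"
    hence "Z - EE e k \<in> q" using assms(2) unfolding Fam_def by blast
    thus False using uf_not_both[OF assms(1) \<open>EE e k \<in> q\<close>] by blast
  qed
next
  assume "y k" thus "EE e k \<in> q" using assms(2) unfolding Fam_def by blast
qed

lemma EE_mem:
  assumes "inj e"
  shows "e (xs, t) \<in> EE e k \<longleftrightarrow> k < length xs \<and> xs!k"
  unfolding EE_def using inj_image_mem_iff[OF assms] by auto

lemma good_point:
  assumes "inj e" "range e \<subseteq> Z" "finite S"
  shows "\<exists>x\<in>Z. x \<notin> S \<and> (\<forall>k<m. x \<in> EE e k \<longleftrightarrow> y k)"
proof -
  let ?xs = "map y [0..<m]"
  have "inj (\<lambda>t. e (?xs, t))" using assms(1) by (auto simp: inj_def)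
  hence "finite ((\<lambda>t. e (?xs, t)) -` S)" using assms(3) by (rule finite_vimageI[rotated])
  then obtain t where t: "t \<notin> (\<lambda>t. e (?xs, t)) -` S"
    using ex_new_if_finite[OF infinite_UNIV_nat] by blast
  have "\<forall>k<m. e (?xs, t) \<in> EE e k \<longleftrightarrow> y k"
    using EE_mem[OF assms(1)] by simp
  thus ?thesis using t assms(2) by blast
qed

lemma surj_F:
  assumes "inj e" "range e \<subseteq> Z"
  shows "\<exists>q\<in>rem Z. Fam e Z y \<subseteq> q"
proof (rule free_ext[OF Fam_sub[OF assms(2)]])
  fix G assume G: "finite G" "G \<subseteq> Fam e Z y \<union> {Z - {z} | z. z \<in> Z}"
  then obtain m S where mS: "finite S" "S \<subseteq> Z" "G \<subseteq> FamB e Z y m \<union> {Z - {z} | z. z \<in> S} \<union> {}"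
    using fin_reduce[of G e Z y "{}"] by auto
  obtain x where x: "x \<in> Z" "x \<notin> S" "\<forall>k<m. x \<in> EE e k \<longleftrightarrow> y k"
    using good_point[OF assms mS(1)] by blast
  have "x \<in> g" if "g \<in> G" for g
  proof -
    have "g \<in> FamB e Z y m \<or> (\<exists>z\<in>S. g = Z - {z})" using mS(3) that by blast
    thus ?thesis unfolding FamB_def using x by auto
  qed
  thus "Z \<inter> \<Inter>G \<noteq> {}" using x(1) by blast
qed


definition good :: "'a set \<Rightarrow> (bool list \<times> nat \<Rightarrow> 'a) \<Rightarrow> 'a set set set \<Rightarrow> (nat \<Rightarrow> bool) \<Rightarrow> bool" where
  "good Z e V y \<longleftrightarrow> (\<forall>q\<in>rem Z. Fam e Z y \<subseteq> q \<longrightarrow> q \<in> V)"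

lemma good_open:
  assumes inj: "inj e" and rng: "range e \<subseteq> Z"
    and V: "openin (beta_remainder Z) V" and g: "good Z e V y"
  shows "\<exists>m. \<forall>y'. (\<forall>k<m. y' k = y k) \<longrightarrow> good Z e V y'"
proof (rule ccontr)
  assume "\<not> (\<exists>m. \<forall>y'. (\<forall>k<m. y' k = y k) \<longrightarrow> good Z e V y')"
  hence bad: "\<forall>m. \<exists>y'. (\<forall>k<m. y' k = y k) \<and> \<not> good Z e V y'" by blast
  define \<B> where "\<B> = {B. B \<subseteq> Z \<and> (\<forall>u\<in>rem Z. B \<in> u \<longrightarrow> u \<in> V)}"
  define H where "H = (\<lambda>B. Z - B) ` \<B>"
  have "\<exists>q\<in>rem Z. Fam e Z y \<union> H \<subseteq> q"
  proof (rule free_ext)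
    show "Fam e Z y \<union> H \<subseteq> Pow Z" using Fam_sub[OF rng] unfolding H_def by blast
    fix G assume G: "finite G" "G \<subseteq> Fam e Z y \<union> H \<union> {Z - {z} |z. z \<in> Z}"
    hence G': "G \<subseteq> Fam e Z y \<union> {Z - {z} |z. z \<in> Z} \<union> H" by blast
    then obtain m S where mS: "finite S" "S \<subseteq> Z" "G \<subseteq> FamB e Z y m \<union> {Z - {z} |z. z \<in> S} \<union> H"
      using fin_reduce[OF G(1) G'] by (elim exE conjE)
    obtain y' where y': "\<forall>k<m. y' k = y k" "\<not> good Z e V y'" using bad by blast
    then obtain q where q: "q \<in> rem Z" "Fam e Z y' \<subseteq> q" "q \<notin> V" unfolding good_def by blast
    have uq: "uf Z q" using q(1) by (simp add: rem_def)
    have "G \<subseteq> q"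
    proof
      fix g assume "g \<in> G"
      hence "g \<in> FamB e Z y m \<or> (\<exists>z\<in>S. g = Z - {z}) \<or> g \<in> H" using mS(3) by blast
      thus "g \<in> q"
      proof (elim disjE)
        assume "g \<in> FamB e Z y m"
        moreover have "FamB e Z y m \<subseteq> Fam e Z y'" using y'(1) by (intro FamB_agree) simp
        ultimately show ?thesis using q(2) by (meson subsetD)
      next
        assume "\<exists>z\<in>S. g = Z - {z}"
        then obtain z where "z \<in> S" "g = Z - {z}" by blast
        thus ?thesis using rem_cof[OF q(1), of z] mS(2) by blast
      next
        assume "g \<in> H"
        then obtain B where B: "B \<in> \<B>" "g = Z - B" unfolding H_def by blast
        have B': "B \<subseteq> Z" "\<forall>u\<in>rem Z. B \<in> u \<longrightarrow> u \<in> V" using B(1) unfolding \<B>_def by auto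
        have "B \<notin> q" using B'(2) q(1,3) by blast
        thus ?thesis using uf_compl[OF uq B'(1)] B(2) by simp
      qed
    qed
    hence "Z \<inter> \<Inter>G \<in> q" using uf_finite_inter[OF uq G(1)] by blast
    thus "Z \<inter> \<Inter>G \<noteq> {}" using uf_empty[OF uq] by metis
  qed
  then obtain q where q: "q \<in> rem Z" "Fam e Z y \<subseteq> q" "H \<subseteq> q" by blast
  have "q \<in> V" using g q unfolding good_def by blast
  then obtain B where B: "B \<subseteq> Z" "B \<in> q" "\<forall>u\<in>rem Z. B \<in> u \<longrightarrow> u \<in> V" using br_nbhd[OF V] by blast
  hence "B \<in> \<B>" unfolding \<B>_def by blast
  hence "Z - B \<in> q" using q(3) unfolding H_def by blast
  thus False using uf_not_both[of Z q B] B(2) q(1) by (simp add: rem_def)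
qed

theorem proposition3p16:
  fixes Z :: "'a set"
  assumes "infinite Z"
  shows "\<not> delta_space (beta_remainder Z)"
proof
  assume delta: "delta_space (beta_remainder Z)"
  obtain f :: "nat \<Rightarrow> 'a" where f: "inj f" "range f \<subseteq> Z"
    using infinite_countable_subset[OF assms] by blast
  define e :: "bool list \<times> nat \<Rightarrow> 'a" where "e = f \<circ> to_nat"
  have inj: "inj e" unfolding e_def using f(1) inj_to_nat by (rule inj_compose)
  have rng: "range e \<subseteq> Z" using f(2) by (auto simp: e_def)
  define D where "D n = {q \<in> rem Z. finite {k. EE e k \<in> q} \<and> (\<exists>k\<ge>n. EE e k \<in> q)}" for n
  have Dprop: "(\<forall>n. D n \<subseteq> topspace (beta_remainder Z)) \<and> decseq D \<and> (\<Inter>n. D n) = {}"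
  proof (intro conjI)
    show "\<forall>n. D n \<subseteq> topspace (beta_remainder Z)" unfolding topspace_br D_def by blast
    show "decseq D" unfolding decseq_def D_def by (auto intro: le_trans)
    show "(\<Inter>n. D n) = {}"
    proof (rule ccontr)
      assume "(\<Inter>n. D n) \<noteq> {}"
      then obtain q where "\<forall>n. q \<in> D n" by blast
      hence "finite {k. EE e k \<in> q}" "\<forall>n. \<exists>k\<ge>n. EE e k \<in> q" unfolding D_def by auto
      moreover have "infinite {k. EE e k \<in> q}"
        unfolding infinite_nat_iff_unbounded_le using calculation(2) by simp
      ultimately show False by blast
    qed
  qed
  have "\<exists>V :: nat \<Rightarrow> 'a set set set. (\<forall>n. openin (beta_remainder Z) (V n)) \<and> decseq V \<and>
            (\<forall>n. D n \<subseteq> V n) \<and> (\<Inter>n. V n) = {}"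
    by (rule mp[OF spec[OF delta[unfolded delta_space_def], of D] Dprop])
  then obtain V where V: "\<forall>n. openin (beta_remainder Z) (V n)" "\<forall>n. D n \<subseteq> V n" "(\<Inter>n. V n) = {}"
    by blast
  have step: "\<forall>jp. \<exists>p'. snd (snd jp) < snd p' \<and> (\<forall>k<snd (snd jp). fst p' k = fst (snd jp) k) \<and>
      (\<forall>y. (\<forall>k<snd p'. y k = fst p' k) \<longrightarrow> good Z e (V (fst jp)) y)"
  proof
    fix jp :: "nat \<times> (nat \<Rightarrow> bool) \<times> nat"
    obtain j s m where p: "jp = (j, s, m)" by (cases jp) auto
    define r where "r k = (if k < m then s k else k = max m j)" for k
    have gr: "good Z e (V j) r"
      unfolding good_def
    proof (intro ballI impI)
      fix q assume q: "q \<in> rem Z" "Fam e Z r \<subseteq> q"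
      have uq: "uf Z q" using q(1) by (simp add: rem_def)
      have iff: "EE e k \<in> q \<longleftrightarrow> r k" for k using Fam_iff[OF uq q(2) rng] .
      have "{k. EE e k \<in> q} \<subseteq> {..max m j}" using iff by (auto simp: r_def split: if_splits)
      hence "finite {k. EE e k \<in> q}" using finite_subset by blast
      moreover have "EE e (max m j) \<in> q" using iff by (simp add: r_def)
      moreover have "\<exists>k\<ge>j. EE e k \<in> q" using calculation(2) by (intro exI[of _ "max m j"]) auto
      ultimately have "q \<in> D j" using q(1) unfolding D_def by auto
      thus "q \<in> V j" using V(2) by blast
    qed
    obtain m0 where m0: "\<forall>y'. (\<forall>k<m0. y' k = r k) \<longrightarrow> good Z e (V j) y'"
      using good_open[OF inj rng spec[OF V(1)] gr] by blast
    have "\<forall>y. (\<forall>k<max m0 (Suc m). y k = r k) \<longrightarrow> good Z e (V j) y" using m0 by auto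
    moreover have "\<forall>k<m. r k = s k" by (simp add: r_def)
    ultimately show "\<exists>p'. snd (snd jp) < snd p' \<and> (\<forall>k<snd (snd jp). fst p' k = fst (snd jp) k) \<and>
      (\<forall>y. (\<forall>k<snd p'. y k = fst p' k) \<longrightarrow> good Z e (V (fst jp)) y)"
      unfolding p by (intro exI[of _ "(r, max m0 (Suc m))"]) auto
  qed
  then obtain nx where nx: "\<And>jp. snd (snd jp) < snd (nx jp) \<and> (\<forall>k<snd (snd jp). fst (nx jp) k = fst (snd jp) k) \<and>
      (\<forall>y. (\<forall>k<snd (nx jp). y k = fst (nx jp) k) \<longrightarrow> good Z e (V (fst jp)) y)"
    using choice[OF step] by blast
  define seq where "seq = rec_nat ((\<lambda>_. False), 0::nat) (\<lambda>j p. nx (j, p))"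
  have seqS: "seq (Suc j) = nx (j, seq j)" for j by (simp add: seq_def)
  define s where "s j = fst (seq j)" for j
  define m where "m j = snd (seq j)" for j
  have mS: "m j < m (Suc j)" for j using nx[of "(j, seq j)"] by (simp add: m_def seqS)
  have agree: "\<forall>k<m j. s (Suc j) k = s j k" for j using nx[of "(j, seq j)"] by (simp add: s_def m_def seqS)
  have cyl: "\<forall>y. (\<forall>k<m (Suc j). y k = s (Suc j) k) \<longrightarrow> good Z e (V j) y" for j
    using nx[of "(j, seq j)"] by (simp add: s_def m_def seqS)
  have mono: "i \<le> i' \<Longrightarrow> m i \<le> m i'" for i i'
    using lift_Suc_mono_le[of m] mS by (meson less_imp_le)
  have mge: "j \<le> m j" for j
  proof (induction j)
    case 0 show ?case by simp
  next
    case (Suc j) thus ?case using mS[of j] by simp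
  qed
  have stable: "k < m i \<Longrightarrow> s (i + d) k = s i k" for k i d
  proof (induction d)
    case 0 show ?case by simp
  next
    case (Suc d)
    have "k < m (i+d)" using mono[of i "i+d"] Suc.prems by simp
    hence "s (Suc (i+d)) k = s (i+d) k" using agree by blast
    thus ?case using Suc by simp
  qed
  define y where "y k = s (Suc k) k" for k
  have gy: "good Z e (V j) y" for j
  proof -
    have "\<forall>k<m (Suc j). y k = s (Suc j) k"
    proof (intro allI impI)
      fix k assume k: "k < m (Suc j)"
      show "y k = s (Suc j) k"
      proof (cases "k \<le> j")
        case True
        have "k < m (Suc k)" using mge[of "Suc k"] by simp
        hence "s (Suc k + (j - k)) k = s (Suc k) k" by (rule stable)
        moreover have "Suc k + (j - k) = Suc j" using True by simp
        ultimately show ?thesis by (simp add: y_def)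
      next
        case False
        have "s (Suc j + (k - j)) k = s (Suc j) k" using k by (rule stable)
        moreover have "Suc j + (k - j) = Suc k" using False by simp
        ultimately show ?thesis by (simp add: y_def)
      qed
    qed
    thus ?thesis using cyl by blast
  qed
  obtain q where q: "q \<in> rem Z" "Fam e Z y \<subseteq> q" using surj_F[OF inj rng] by blast
  have "q \<in> V j" for j using gy[of j] q unfolding good_def by blast
  thus False using V(3) by blast
qed

end
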